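(* For integers $b\ge 0$ and $c\ge 2b+1$, $$\mathrm{gf}(2b+1,b,c,0)\big|_{X=Y=1}=2^{2b+1-c}\,q^{b(2b+1)-\frac12(c-1)c}\,\frac{(q^{4b+4};q^4)_{c-2b-1}}{(q^2;q^2)_{c-2b-1}}.$$
   Context: $X,Y,q$ are indeterminates and $(u;p)_n=\prod_{j=0}^{n-1}(1-up^j)$. Lattice paths in $\mathbb Z\times\mathbb Z$ use unit steps right, $(s,t)\to(s+1,t)$, and down, $(s,t)\to(s,t-1)$; a right step from $(s,t)$ has weight $\frac{Xq^{s-2t}+Yq^{2t-s}}{2}$, a down step weight $1$, a path's weight is the product of its step weights, and $\mathrm{gf}(a,b,c,d)$ is the sum of the weights of all paths from $(a,b)$ to $(c,d)$. *)

theory Defs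
  imports Complex_Main "HOL-Computational_Algebra.Formal_Laurent_Series"
begin

definition qpoch :: "'a::comm_ring_1 \<Rightarrow> 'a \<Rightarrow> nat \<Rightarrow> 'a" where
  "qpoch u p n = (\<Prod>j<n. 1 - u * p ^ j)"

definition rstep_wt :: "'a::field \<Rightarrow> 'a \<Rightarrow> 'a \<Rightarrow> int \<Rightarrow> int \<Rightarrow> 'a" where
  "rstep_wt X Y q s t = (X * q powi (s - 2*t) + Y * q powi (2*t - s)) / 2"

(* A path is a list of steps: True = right step (s,t)->(s+1,t), False = down step (s,t)->(s,t-1) *)
fun path_end :: "int \<Rightarrow> int \<Rightarrow> bool list \<Rightarrow> int \<times> int" where
  "path_end s t [] = (s, t)"
| "path_end s t (True # xs) = path_end (s + 1) t xs"
| "path_end s t (False # xs) = path_end s (t - 1) xs"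

fun path_wt :: "'a::field \<Rightarrow> 'a \<Rightarrow> 'a \<Rightarrow> int \<Rightarrow> int \<Rightarrow> bool list \<Rightarrow> 'a" where
  "path_wt X Y q s t [] = 1"
| "path_wt X Y q s t (True # xs) = rstep_wt X Y q s t * path_wt X Y q (s + 1) t xs"
| "path_wt X Y q s t (False # xs) = path_wt X Y q s (t - 1) xs"

(* generating function of all paths from (a,b) to (c,d); every such path has
   exactly (c-a)+(b-d) steps, so the length condition only makes finiteness explicit *)
definition gf :: "'a::field \<Rightarrow> 'a \<Rightarrow> 'a \<Rightarrow> int \<Rightarrow> int \<Rightarrow> int \<Rightarrow> int \<Rightarrow> 'a" where
  "gf X Y q a b c d =
     (\<Sum>xs\<in>{xs. length xs = nat ((c - a) + (b - d)) \<and> path_end a b xs = (c, d)}.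
        path_wt X Y q a b xs)"

end

theory Submission
  imports Defs
begin

fun h :: "'a::field \<Rightarrow> 'a \<Rightarrow> 'a \<Rightarrow> nat \<Rightarrow> int \<Rightarrow> int \<Rightarrow> int \<Rightarrow> int \<Rightarrow> 'a" where
  "h X Y q 0 a b c d = (if a = c \<and> b = d then 1 else 0)"
| "h X Y q (Suc N) a b c d = rstep_wt X Y q a b * h X Y q N (a+1) b c d + h X Y q N a (b-1) c d"

lemma finite_len: "finite {xs::bool list. length xs = N \<and> P xs}"
proof -
  have "finite {xs::bool list. set xs \<subseteq> UNIV \<and> length xs = N}"
    by (rule finite_lists_length_eq) simp
  then show ?thesis by (rule rev_finite_subset) auto
qed

lemma sum_h:
  "(\<Sum>xs\<in>{xs. length xs = N \<and> path_end a b xs = (c,d)}. path_wt X Y q a b xs) = h X Y q N a b c d"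
proof (induction N arbitrary: a b)
  case 0
  have "{xs. length xs = 0 \<and> path_end a b xs = (c,d)} = (if a = c \<and> b = d then {[]} else {})"
    by auto
  then show ?case by simp
next
  case (Suc N)
  let ?S1 = "{xs. length xs = N \<and> path_end (a+1) b xs = (c,d)}"
  let ?S2 = "{xs. length xs = N \<and> path_end a (b-1) xs = (c,d)}"
  have eq: "{xs. length xs = Suc N \<and> path_end a b xs = (c,d)} = Cons True ` ?S1 \<union> Cons False ` ?S2"
  proof (rule set_eqI, rule iffI)
    fix xs assume "xs \<in> {xs. length xs = Suc N \<and> path_end a b xs = (c,d)}"
    then obtain x ys where xs: "xs = x # ys" and "length ys = N" "path_end a b (x#ys) = (c,d)"
      by (cases xs) auto
    then show "xs \<in> Cons True ` ?S1 \<union> Cons False ` ?S2" by (cases x) auto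
  qed auto
  have "(\<Sum>xs\<in>Cons True ` ?S1 \<union> Cons False ` ?S2. path_wt X Y q a b xs)
      = (\<Sum>xs\<in>Cons True ` ?S1. path_wt X Y q a b xs) + (\<Sum>xs\<in>Cons False ` ?S2. path_wt X Y q a b xs)"
    by (rule sum.union_disjoint) (auto intro: finite_len)
  also have "(\<Sum>xs\<in>Cons True ` ?S1. path_wt X Y q a b xs) = (\<Sum>xs\<in>?S1. path_wt X Y q a b (True#xs))"
    by (simp add: sum.reindex)
  also have "(\<Sum>xs\<in>Cons False ` ?S2. path_wt X Y q a b xs) = (\<Sum>xs\<in>?S2. path_wt X Y q a b (False#xs))"
    by (simp add: sum.reindex)
  finally show ?case using Suc by (simp add: eq sum_distrib_left[symmetric])
qed

lemma h_last:
  "h X Y q (Suc N) a b c d = h X Y q N a b (c-1) d * rstep_wt X Y q (c-1) d + h X Y q N a b c (d+1)"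
proof (induction N arbitrary: a b)
  case 0
  then show ?case by auto
next
  case (Suc N)
  show ?case
    apply (subst h.simps(2))
    apply (subst Suc.IH)+
    apply (simp add: algebra_simps)
    done
qed

lemma h_shift: "h X Y q N (a+2) (b+1) (c+2) (d+1) = h X Y q N a b c d"
proof (induction N arbitrary: a b)
  case 0 then show ?case by auto
next
  case (Suc N)
  have w: "rstep_wt X Y q (a+2) (b+1) = rstep_wt X Y q a b"
    by (simp add: rstep_wt_def algebra_simps)
  have "h X Y q N (a + 2 + 1) (b + 1) (c + 2) (d + 1) = h X Y q N (a+1) b c d"
    using Suc.IH[of "a+1" b] by (simp add: algebra_simps)
  moreover have "h X Y q N (a + 2) (b + 1 - 1) (c + 2) (d + 1) = h X Y q N a (b-1) c d"
    using Suc.IH[of a "b-1"] by (simp add: algebra_simps)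
  ultimately show ?case by (simp add: w)
qed

lemma h_zero_down: "b < d \<Longrightarrow> h X Y q N a b c d = 0"
  by (induction N arbitrary: a b) auto

lemma h_zero_right: "a > c \<Longrightarrow> h X Y q N a b c d = 0"
  by (induction N arbitrary: a b) auto

lemma h_vert: "h X Y q N a (d + int N) a d = 1"
proof (induction N)
  case 0 then show ?case by simp
next
  case (Suc N)
  have "h X Y q N a (d + int (Suc N) - 1) a d = 1" using Suc by simp
  then show ?case by (simp add: h_zero_right)
qed

lemma core:
  fixes a d P0 x y z t :: "'a::field_char_0"
  assumes "d \<noteq> 0" "P0 \<noteq> 0" "x \<noteq> 0" "y \<noteq> 0" "z \<noteq> 0" "t \<noteq> 0" "1 - x^2*y^2 \<noteq> 0"
  shows "a*(1 - x^4*z^4*y^4) / (2*t * (P0 * (y*z^2*x)) * (d*(1 - x^2*y^2)))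
     = a/(t*P0*d) * ((y*z^2*x + inverse (y*z^2*x))/2)
     + (1 - z^4)*a / (2*t*(P0*z^2/(y*x))*(d*(1-x^2*y^2)))"
  using assms by (simp add: field_simps) algebra

lemma qpoch_Suc1: "qpoch u p (Suc n) = qpoch u p n * (1 - u*p^n)"
  by (simp add: qpoch_def)

lemma qpoch_Suc2: "qpoch u p (Suc n) = (1 - u) * qpoch (u*p) p n"
  unfolding qpoch_def by (subst prod.lessThan_Suc_shift) (simp add: mult.assoc)

fun E :: "nat \<Rightarrow> nat \<Rightarrow> nat" where
  "E 0 B = 0"
| "E (Suc m) B = E m B + m + 2*B + 1"

lemma E_SucB: "E n (Suc B) = E n B + 2*n"
  by (induction n) auto

definition R :: "'a::field_char_0 \<Rightarrow> nat \<Rightarrow> nat \<Rightarrow> 'a" where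
  "R x n B = qpoch (x^(4*B+4)) (x^4) n / (2^n * x^(E n B) * qpoch (x^2) (x^2) n)"

lemma R_rec:
  fixes x :: "'a::field_char_0"
  assumes x: "x \<noteq> 0" and D: "\<And>j. 1 - x^2*(x^2)^j \<noteq> 0"
  shows "R x (Suc m) B = R x m B * ((x^(m+2*B+1) + inverse (x^(m+2*B+1)))/2)
     + (if B = 0 then 0 else R x (Suc m) (B-1))"
proof -
  define a where "a = qpoch (x^(4*B+4)) (x^4) m"
  define d where "d = qpoch (x^2) (x^2) m"
  define P0 where "P0 = x^(E m B)"
  define y where "y = x^m"
  define z where "z = x^B"
  define t where "t = (2::'a)^m"
  have dnz: "d \<noteq> 0" unfolding d_def qpoch_def using D by (simp add: prod_zero_iff)
  have nz: "P0 \<noteq> 0" "y \<noteq> 0" "z \<noteq> 0" "t \<noteq> 0" using x by (auto simp: P0_def y_def z_def t_def)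
  have D': "1 - x^2*y^2 \<noteq> 0" using D[of m] by (simp add: y_def power_mult_distrib[symmetric] power_mult[symmetric] mult.commute)
  have k: "x^(m+2*B+1) = y*z^2*x" by (simp add: y_def z_def power_add power_mult[symmetric] mult.commute)
  have A1: "qpoch (x^(4*B+4)) (x^4) (Suc m) = a*(1 - x^4*z^4*y^4)"
    by (simp add: qpoch_Suc1 a_def y_def z_def power_add power_mult[symmetric] mult.commute mult.left_commute)
  have D1: "qpoch (x^2) (x^2) (Suc m) = d*(1 - x^2*y^2)"
    by (simp add: qpoch_Suc1 d_def y_def power_mult[symmetric] mult.commute)
  have E1: "x^(E (Suc m) B) = P0 * (y*z^2*x)"
    by (simp add: P0_def y_def z_def power_add power_mult[symmetric] mult.commute mult.left_commute)
  have main: "R x (Suc m) B = R x m B * ((x^(m+2*B+1) + inverse (x^(m+2*B+1)))/2)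
     + (1 - z^4)*a / (2*t*(P0*z^2/(y*x))*(d*(1-x^2*y^2)))"
  proof -
    have r1: "R x (Suc m) B = a*(1 - x^4*z^4*y^4) / (2*t * (P0 * (y*z^2*x)) * (d*(1 - x^2*y^2)))"
      unfolding R_def A1 D1 E1 by (simp add: t_def)
    have r0: "R x m B = a/(t*P0*d)" unfolding R_def a_def t_def P0_def d_def by simp
    show ?thesis unfolding r1 r0 k using core[OF dnz nz(1) x nz(2,3,4) D'] .
  qed
  show ?thesis
  proof (cases B)
    case 0
    then show ?thesis using main by (simp add: z_def)
  next
    case (Suc B')
    have A2: "qpoch (x^(4*B'+4)) (x^4) (Suc m) = (1 - z^4)*a"
      by (simp add: qpoch_Suc2 a_def z_def Suc power_add power_mult_distrib power_mult[symmetric] mult.commute mult.left_commute)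
    have "x^(E (Suc m) B') * (y^2*x^2) = P0 * (y*z^2*x)"
    proof -
      have ex: "E (Suc m) B = E (Suc m) B' + (2*m+2)" using Suc E_SucB by simp
      have "x^(2*m+2) = y^2*x^2" unfolding y_def by (simp add: power_add power_mult mult.commute power2_eq_square)
      then show ?thesis using E1 ex by (metis power_add)
    qed
    then have E2: "x^(E (Suc m) B') = P0*z^2/(y*x)"
      using x nz by (simp add: field_simps power2_eq_square)
    have "R x (Suc m) B' = (1 - z^4)*a / (2*t*(P0*z^2/(y*x))*(d*(1-x^2*y^2)))"
      unfolding R_def by (subst A2, subst D1, subst E2) (simp add: t_def)
    then show ?thesis using main Suc by simp
  qed
qed


lemma w_val:
  fixes x :: "'a::field"
  shows "rstep_wt 1 1 x (int k) 0 = (x^k + inverse (x^k))/2"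
  unfolding rstep_wt_def by (simp add: power_int_minus)

lemma main_h:
  fixes x :: "'a::field_char_0"
  assumes x: "x \<noteq> 0" and D: "\<And>j. 1 - x^2*(x^2)^j \<noteq> 0"
  shows "h 1 1 x (n+B) (2*int B+1) (int B) (2*int B+1+int n) 0 = R x n B"
proof (induction B arbitrary: n)
  case 0
  show ?case
  proof (induction n)
    case 0
    show ?case using h_vert[of 1 1 x 0 1 0] by (simp add: R_def qpoch_def)
  next
    case (Suc m)
    have "h 1 1 x (Suc m + 0) (2*int 0+1) (int 0) (2*int 0+1+int (Suc m)) 0
       = h 1 1 x (m+0) (2*int 0+1) (int 0) (2*int 0+1+int m) 0 * rstep_wt 1 1 x (int (m+2*0+1)) 0
         + h 1 1 x m 1 0 (2 + int m) 1"
      using h_last[of 1 1 x m 1 0 "2 + int m" 0] by (simp add: algebra_simps)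
    also have "\<dots> = R x m 0 * ((x^(m+2*0+1) + inverse (x^(m+2*0+1)))/2)"
      using Suc by (simp only: w_val h_zero_down[of 0 1] ) simp
    also have "\<dots> = R x (Suc m) 0" using R_rec[OF x D, of m 0] by simp
    finally show ?case .
  qed
next
  case (Suc B')
  note outer = Suc.IH
  show ?case
  proof (induction n)
    case 0
    show ?case using h_vert[of 1 1 x "Suc B'" "2*int (Suc B')+1" 0] by (simp add: R_def qpoch_def)
  next
    case (Suc m)
    have "h 1 1 x (Suc m + Suc B') (2*int (Suc B')+1) (int (Suc B')) (2*int (Suc B')+1+int (Suc m)) 0
       = h 1 1 x (m+Suc B') (2*int (Suc B')+1) (int (Suc B')) (2*int (Suc B')+1+int m) 0
           * rstep_wt 1 1 x (int (m+2*Suc B'+1)) 0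
         + h 1 1 x (m + Suc B') (2*int B'+1+2) (int B'+1) (2*int B'+1+int (Suc m) + 2) (0+1)"
      using h_last[of 1 1 x "m + Suc B'" "2*int (Suc B')+1" "int (Suc B')" "2*int (Suc B')+1+int (Suc m)" 0]
      by (simp add: algebra_simps)
    also have "h 1 1 x (m + Suc B') (2*int B'+1+2) (int B'+1) (2*int B'+1+int (Suc m) + 2) (0+1)
        = R x (Suc m) B'"
      using outer[of "Suc m"] by (subst h_shift) simp
    also have "h 1 1 x (m+Suc B') (2*int (Suc B')+1) (int (Suc B')) (2*int (Suc B')+1+int m) 0
           * rstep_wt 1 1 x (int (m+2*Suc B'+1)) 0
       = R x m (Suc B') * ((x^(m+2*Suc B'+1) + inverse (x^(m+2*Suc B'+1)))/2)"
      by (simp only: Suc.IH w_val)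
    also have "R x m (Suc B') * ((x^(m+2*Suc B'+1) + inverse (x^(m+2*Suc B'+1)))/2) + R x (Suc m) B'
        = R x (Suc m) (Suc B')"
      using R_rec[OF x D, of m "Suc B'"] by simp
    finally show ?case .
  qed
qed


lemma E_closed: "2 * E n B = n * (n + 4*B + 1)"
  by (induction n) (auto simp: algebra_simps)

lemma fls_D: "1 - (fls_X::rat fls)^2 * (fls_X^2)^j \<noteq> 0"
proof
  assume h: "1 - (fls_X::rat fls)^2 * (fls_X^2)^j = 0"
  have "(fls_X::rat fls)^2 * (fls_X^2)^j = fls_X^(2+2*j)" by (simp add: power_add power_mult power2_eq_square)
  with h have "fls_nth (1 - (fls_X::rat fls)^(2+2*j)) 0 = 0" by simp
  then show False by simp
qed

lemma fin_alg: "(A::'a::field) / (a*b*D) = inverse a * inverse b * A / D"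
  by (simp add: divide_inverse inverse_mult_distrib mult_ac)

theorem mainTheorem9:
  fixes b c :: int
  assumes "b \<ge> 0" and "c \<ge> 2*b + 1"
  shows "gf (1::rat fls) 1 fls_X (2*b + 1) b c 0 =
    (2::rat fls) powi (2*b + 1 - c) * fls_X powi (b*(2*b + 1) - ((c - 1) * c) div 2)
    * qpoch (fls_X ^ nat (4*b + 4)) (fls_X ^ 4) (nat (c - 2*b - 1))
    / qpoch (fls_X ^ 2) (fls_X ^ 2) (nat (c - 2*b - 1))"
proof -
  define B where "B = nat b"
  define n where "n = nat (c - 2*b - 1)"
  have bB: "b = int B" using assms B_def by simp
  have cn: "c = 2*int B + 1 + int n" using assms n_def bB by simp
  have N: "nat ((c - (2*b+1)) + (b - 0)) = n + B" using cn bB by simp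
  have "gf (1::rat fls) 1 fls_X (2*b + 1) b c 0 = h 1 1 fls_X (nat ((c - (2*b+1)) + (b - 0))) (2*b + 1) b c 0"
    unfolding gf_def by (rule sum_h)
  also have "\<dots> = h 1 1 fls_X (n+B) (2*int B+1) (int B) (2*int B+1+int n) 0"
    unfolding N by (simp only: bB cn)
  also have "\<dots> = R fls_X n B" by (rule main_h[OF fls_X_nonzero fls_D])
  finally have L: "gf (1::rat fls) 1 fls_X (2*b + 1) b c 0 = R fls_X n B" .
  have e1: "2*b + 1 - c = - int n" using cn bB by simp
  have "(c-1)*c = 2*(b*(2*b+1)) + int (2 * E n B)"
    unfolding E_closed using cn bB by (simp add: algebra_simps)
  then have e2: "b*(2*b + 1) - ((c - 1) * c) div 2 = - int (E n B)" by simp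
  have e3: "nat (4*b+4) = 4*B+4" using bB by simp
  have p1: "(2::rat fls) powi (- int n) = inverse (2^n)" by (simp add: power_int_minus)
  have p2: "(fls_X::rat fls) powi (- int (E n B)) = inverse (fls_X^(E n B))"
    by (simp only: power_int_minus power_int_of_nat)
  show ?thesis
    unfolding L e1 e2 e3 p1 p2 n_def[symmetric] R_def by (rule fin_alg)
qed

end
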